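(* Assume (A1)–(A3) and $\alpha>1$. Let $LR_{target}>0$ and $\hat T>0$ be given. Consider the problem of finding a concentration profile $C$ such that $LR(T)=LR_{target}$ for some $T\le\hat T$, with $AUC[C]$ as small as possible. Let $c_{opt}$ be the unique solution in $(0,\infty)$ of $k'(c)=\frac{k(c)-r}{c}$, $T_{opt}=\frac{\ln(10)LR_{target}}{k(c_{opt})-r}$, $C_{opt}(t)=c_{opt}$ for $0\le t\le T_{opt}$ and $C_{opt}(t)=0$ for $t>T_{opt}$, and $$T_{min}=\frac{\ln(10)\,LR_{target}}{k_{max}-r}.$$ Then: (i) If $\hat T\ge T_{opt}$, the solution of the problem is $C_{opt}$. (ii) If $\hat T\le T_{min}$, there is no concentration profile $C$ and no $T\le\hat T$ with $LR(T)=LR_{target}$; thus the problem has no solution. (iii) If $T_{min}<\hat T<T_{opt}$, the equation $\hat T\,[k(\hat c)-r]=\ln(10)\,LR_{target}$ has a unique solution $\hat c>0$, and the unique solution (up to a.e. equality) of the problem is $\hat C(t)=\hat c$ for $0\le t\le\hat T$, $\hat C(t)=0$ for $t>\hat T$.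
   Context: Let $r>0$ and let $k:[0,\infty)\to[0,\infty)$ satisfy: (A1) $k(0)=0$, $k$ is continuous and strictly increasing on $[0,\infty)$, and twice differentiable on $(0,\infty)$; (A2) $\lim_{c\to\infty}k(c)=k_{max}<\infty$; (A3) either (i) (concave case) $k''(c)<0$ for all $c>0$, or (ii) (sigmoidal case) there is $c_{infl}>0$ with $k''(c)>0$ for $0<c<c_{infl}$ and $k''(c)<0$ for $c>c_{infl}$. Set $\alpha=k_{max}/r$. A concentration profile is a non-negative function $C\in L^1[0,\infty)$, with $AUC[C]=\int_0^\infty C(t)\,dt$. For $T\ge0$, $LR(T)=\frac{1}{\ln 10}\int_0^T[k(C(t))-r]\,dt$. *)

theory Defs
  imports "HOL-Analysis.Analysis"
begin

definition conc_profile :: "(real \<Rightarrow> real) \<Rightarrow> bool" where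
  "conc_profile C \<longleftrightarrow> (\<forall>t\<ge>0. 0 \<le> C t) \<and> C integrable_on {0..}"

definition AUC :: "(real \<Rightarrow> real) \<Rightarrow> real" where
  "AUC C = integral {0..} C"

definition LR :: "(real \<Rightarrow> real) \<Rightarrow> real \<Rightarrow> (real \<Rightarrow> real) \<Rightarrow> real \<Rightarrow> real" where
  "LR k r C T = (1 / ln 10) * integral {0..T} (\<lambda>t. k (C t) - r)"

definition feasible :: "(real \<Rightarrow> real) \<Rightarrow> real \<Rightarrow> real \<Rightarrow> real \<Rightarrow> (real \<Rightarrow> real) \<Rightarrow> bool" where
  "feasible k r LRt That C \<longleftrightarrow>
     conc_profile C \<and> (\<exists>T. 0 \<le> T \<and> T \<le> That \<and> LR k r C T = LRt)"

definition is_solution :: "(real \<Rightarrow> real) \<Rightarrow> real \<Rightarrow> real \<Rightarrow> real \<Rightarrow> (real \<Rightarrow> real) \<Rightarrow> bool" where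
  "is_solution k r LRt That C \<longleftrightarrow>
     feasible k r LRt That C \<and> (\<forall>D. feasible k r LRt That D \<longrightarrow> AUC C \<le> AUC D)"

definition step_profile :: "real \<Rightarrow> real \<Rightarrow> real \<Rightarrow> real" where
  "step_profile c T t = (if 0 \<le> t \<and> t \<le> T then c else 0)"

definition c_opt :: "(real \<Rightarrow> real) \<Rightarrow> real \<Rightarrow> real" where
  "c_opt k r = (THE c. 0 < c \<and> deriv k c = (k c - r) / c)"

definition T_opt :: "(real \<Rightarrow> real) \<Rightarrow> real \<Rightarrow> real \<Rightarrow> real" where
  "T_opt k r LRt = ln 10 * LRt / (k (c_opt k r) - r)"

definition T_min :: "real \<Rightarrow> real \<Rightarrow> real \<Rightarrow> real" where
  "T_min kmax r LRt = ln 10 * LRt / (kmax - r)"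

end

theory Submission
  imports Defs
begin


lemma nonneg_int0_negligible:
  fixes f :: "real \<Rightarrow> real"
  assumes int: "(f has_integral 0) S" and nn: "\<And>x. x \<in> S \<Longrightarrow> 0 \<le> f x"
  shows "negligible {x\<in>S. f x \<noteq> 0}"
proof -
  note intl = has_integral_integrable[OF int]
  have af: "f absolutely_integrable_on S"
    using nn intl by (rule_tac nonnegative_absolutely_integrable_1) auto
  then have "integral S f = set_lebesgue_integral lebesgue S f"
    by (intro set_lebesgue_integral_eq_integral(2)[symmetric])
  moreover have "integral S f = 0" using int by blast
  ultimately have "set_lebesgue_integral lebesgue S f = 0" by simp
  then have "AE x in lebesgue. indicator S x *\<^sub>R f x = 0"
    unfolding set_lebesgue_integral_def
    using integral_nonneg_eq_0_iff_AE[of lebesgue "\<lambda>x. indicat_real S x *\<^sub>R f x"] af nn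
    by (auto simp: set_integrable_def indicator_def)
  then have "AE x in lebesgue. x \<notin> {x\<in>S. f x \<noteq> 0}"
    by eventually_elim (auto simp: indicator_def)
  then obtain N where N: "N \<in> null_sets lebesgue" "{x\<in>S. f x \<noteq> 0} \<subseteq> N"
    by (auto simp: eventually_ae_filter)
  then show ?thesis
    by (metis negligible_iff_null_sets negligible_subset)
qed

lemma int_sub:
  fixes f :: "real \<Rightarrow> real"
  assumes "f integrable_on {0..}" "\<And>x. x \<ge> 0 \<Longrightarrow> 0 \<le> f x" "T \<ge> 0"
  shows "f integrable_on {0..T}"
proof -
  have "f absolutely_integrable_on {0..}"
    using assms by (rule_tac nonnegative_absolutely_integrable_1) auto
  then have "f absolutely_integrable_on {0..T}"
    by (rule set_integrable_subset) auto
  then show ?thesis using absolutely_integrable_on_def by blast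
qed



lemma step_facts:
  assumes "Ts \<ge> 0"
  shows "(step_profile cs Ts has_integral cs * Ts) {0..}"
    and "integral {0..Ts} (\<lambda>t. k (step_profile cs Ts t) - r) = Ts * (k cs - r)"
proof -
  have "((\<lambda>t. cs) has_integral cs * Ts) {0..Ts}"
    using has_integral_const_real[of cs 0 Ts] assms by (simp add: mult.commute)
  then have "(step_profile cs Ts has_integral cs * Ts) {0..Ts}"
    by (rule has_integral_cong[THEN iffD1, rotated]) (simp add: step_profile_def)
  then show "(step_profile cs Ts has_integral cs * Ts) {0..}"
    by (rule has_integral_on_superset) (auto simp: step_profile_def)
  have "integral {0..Ts} (\<lambda>t. k (step_profile cs Ts t) - r) = integral {0..Ts} (\<lambda>t. k cs - r)"
    by (rule integral_cong) (simp add: step_profile_def)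
  also have "\<dots> = Ts * (k cs - r)" using assms by simp
  finally show "integral {0..Ts} (\<lambda>t. k (step_profile cs Ts t) - r) = Ts * (k cs - r)" .
qed

lemma abstract_opt:
  fixes k :: "real \<Rightarrow> real"
  assumes line: "\<And>c. c \<ge> 0 \<Longrightarrow> k c - r \<le> A + B * c"
    and eqc: "\<And>c. c \<ge> 0 \<Longrightarrow> k c - r = A + B * c \<Longrightarrow> c = cs"
    and atcs: "k cs - r = A + B * cs"
    and B: "B > 0" and A: "A \<ge> 0" and cs: "cs > 0" and Ts: "Ts \<ge> 0" "Ts \<le> That"
    and TsLR: "Ts * (k cs - r) = ln 10 * LRt"
    and AT: "A = 0 \<or> Ts = That"
    and LRt: "LRt > 0"
  shows "is_solution k r LRt That (step_profile cs Ts) \<and>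
        (\<forall>D. is_solution k r LRt That D \<longrightarrow>
           (AE t in lborel. t \<ge> 0 \<longrightarrow> D t = step_profile cs Ts t))"
proof -
  have sf: "(step_profile cs Ts has_integral cs * Ts) {0..}"
    "integral {0..Ts} (\<lambda>t. k (step_profile cs Ts t) - r) = Ts * (k cs - r)"
    using step_facts[OF Ts(1)] by simp_all
  have ln10: "ln (10::real) > 0" by simp
  have AUCs: "AUC (step_profile cs Ts) = cs * Ts"
    using sf(1) by (simp add: AUC_def integral_unique)
  have feas: "feasible k r LRt That (step_profile cs Ts)"
    unfolding feasible_def conc_profile_def
  proof (intro conjI allI impI exI)
    show "step_profile cs Ts integrable_on {0..}" using sf(1) by (rule has_integral_integrable)
    show "LR k r (step_profile cs Ts) Ts = LRt"
      unfolding LR_def sf(2) TsLR using ln10 by simp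
  qed (use cs Ts in \<open>auto simp: step_profile_def\<close>)
  have main: "cs * Ts \<le> AUC D \<and> (AUC D \<le> cs * Ts \<longrightarrow>
       (AE t in lborel. t \<ge> 0 \<longrightarrow> D t = step_profile cs Ts t))"
    if fD: "feasible k r LRt That D" for D
  proof -
    from fD obtain T where cD: "conc_profile D" and T: "0 \<le> T" "T \<le> That"
      and LRD: "LR k r D T = LRt" unfolding feasible_def by blast
    have Dnn: "\<And>t. t \<ge> 0 \<Longrightarrow> D t \<ge> 0" and Dint: "D integrable_on {0..}"
      using cD unfolding conc_profile_def by auto
    have I0: "integral {0..T} (\<lambda>t. k (D t) - r) = ln 10 * LRt"
      using LRD ln10 unfolding LR_def by (simp add: field_simps)
    have Kint: "(\<lambda>t. k (D t) - r) integrable_on {0..T}"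
    proof (rule ccontr)
      assume "\<not> ?thesis"
      then have "integral {0..T} (\<lambda>t. k (D t) - r) = 0" by (simp add: not_integrable_integral)
      with I0 LRt ln10 show False by simp
    qed
    have DintT: "D integrable_on {0..T}" using int_sub[OF Dint Dnn T(1)] by auto
    define f where "f t = A + B * D t - (k (D t) - r)" for t
    define IT where "IT = integral {0..T} D"
    have fhas: "(f has_integral (A * T + B * IT - ln 10 * LRt)) {0..T}"
    proof -
      have "((\<lambda>t. A) has_integral A * T) {0..T}"
        using has_integral_const_real[of A 0 T] T by (simp add: mult.commute)
      moreover have "((\<lambda>t. B * D t) has_integral B * IT) {0..T}"
        unfolding IT_def using DintT by (intro has_integral_mult_right) blast
      moreover have "((\<lambda>t. k (D t) - r) has_integral ln 10 * LRt) {0..T}"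
        using Kint I0 by (metis has_integral_integrable_integral)
      ultimately show ?thesis unfolding f_def
        by (intro has_integral_diff has_integral_add)
    qed
    have fnn: "0 \<le> f t" if "t \<in> {0..T}" for t
    proof -
      have "t \<ge> 0" using that by simp
      then have "k (D t) - r \<le> A + B * D t" using line Dnn by blast
      then show ?thesis by (simp add: f_def)
    qed
    have F0: "A * T + B * IT - ln 10 * LRt \<ge> 0"
      using has_integral_nonneg[OF fhas fnn] by simp
    define e where "e t = (if t \<le> T then 0 else D t)" for t
    have ehas: "(e has_integral (AUC D - IT)) {0..}"
    proof -
      have "(D has_integral AUC D) {0..}" using Dint unfolding AUC_def by (rule integrable_integral)
      moreover have "((\<lambda>t. if t \<in> {0..T} then D t else 0) has_integral IT) {0..}"
        unfolding IT_def using DintT by (subst has_integral_restrict) auto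
      ultimately have "((\<lambda>t. D t - (if t \<in> {0..T} then D t else 0)) has_integral (AUC D - IT)) {0..}"
        by (rule has_integral_diff)
      then show ?thesis
        by (rule has_integral_cong[THEN iffD1, rotated]) (auto simp: e_def)
    qed
    have enn: "0 \<le> e t" if "t \<in> {0..}" for t using Dnn[of t] that by (simp add: e_def)
    have E0: "AUC D - IT \<ge> 0" using has_integral_nonneg[OF ehas enn] by simp
    have LRs: "ln 10 * LRt = Ts * A + B * cs * Ts" using TsLR atcs by (simp add: algebra_simps)
    have ATs: "A * T \<le> A * Ts" using AT T A Ts mult_left_mono[of T That A] by auto
    have key: "B * (cs * Ts) \<le> B * IT - (A * T + B * IT - ln 10 * LRt)"
      using LRs ATs by (simp add: algebra_simps)
    have lb: "cs * Ts \<le> AUC D"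
    proof -
      have "B * (cs * Ts) \<le> B * IT" using key F0 by linarith
      then have "cs * Ts \<le> IT" using B by simp
      then show ?thesis using E0 by linarith
    qed
    have ae: "AE t in lborel. t \<ge> 0 \<longrightarrow> D t = step_profile cs Ts t" if up: "AUC D \<le> cs * Ts"
    proof -
      have "B * (cs * Ts) \<le> B * IT" using key F0 by linarith
      then have c1: "cs * Ts \<le> IT" using B by simp
      have IT: "IT = cs * Ts" and AU: "AUC D = IT" using c1 E0 up by linarith+
      have "B * (cs * Ts) \<le> B * (cs * Ts) - (A * T + B * IT - ln 10 * LRt)"
        using key IT by simp
      then have Fz: "A * T + B * IT - ln 10 * LRt = 0" using F0 by linarith
      have N1: "negligible {t\<in>{0..T}. f t \<noteq> 0}"
        using nonneg_int0_negligible[OF fhas[unfolded Fz] fnn] .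
      have N2: "negligible {t\<in>{0..}. e t \<noteq> 0}"
        using nonneg_int0_negligible[OF ehas[unfolded AU, simplified] enn] .
      have Dcs: "D t = cs" if "t \<in> {0..T}" "t \<notin> {t\<in>{0..T}. f t \<noteq> 0}" for t
      proof -
        have "f t = 0" using that by auto
        then have "k (D t) - r = A + B * D t" unfolding f_def by simp
        then show ?thesis using eqc Dnn that by auto
      qed
      have "(D has_integral cs * T) {0..T}"
      proof (rule has_integral_spike[OF N1])
        show "((\<lambda>t. cs) has_integral cs * T) {0..T}"
          using has_integral_const_real[of cs 0 T] T by (simp add: mult.commute)
      qed (use Dcs in auto)
      then have "IT = cs * T" unfolding IT_def by (rule integral_unique)
      then have TT: "T = Ts" using IT cs by simp
      have "negligible ({t\<in>{0..T}. f t \<noteq> 0} \<union> {t\<in>{0..}. e t \<noteq> 0})"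
        using N1 N2 by (rule negligible_Un)
      then have "AE t in lebesgue. t \<notin> ({t\<in>{0..T}. f t \<noteq> 0} \<union> {t\<in>{0..}. e t \<noteq> 0})"
        unfolding negligible_iff_null_sets by (rule AE_not_in)
      then have "AE t in lebesgue. t \<ge> 0 \<longrightarrow> D t = step_profile cs Ts t"
      proof eventually_elim
        case (elim t)
        show ?case
        proof
          assume t0: "t \<ge> 0"
          show "D t = step_profile cs Ts t"
          proof (cases "t \<le> T")
            case True then show ?thesis using Dcs[of t] elim t0 TT by (auto simp: step_profile_def)
          next
            case False then show ?thesis using elim t0 TT by (auto simp: step_profile_def e_def)
          qed
        qed
      qed
      then show ?thesis by (simp add: AE_completion_iff)
    qed
    show ?thesis using lb ae by blast
  qed
  show ?thesis
  proof (intro conjI allI impI)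
    show "is_solution k r LRt That (step_profile cs Ts)"
      unfolding is_solution_def using feas main AUCs by auto
    fix D assume "is_solution k r LRt That D"
    then have "feasible k r LRt That D" "AUC D \<le> cs * Ts"
      unfolding is_solution_def using feas AUCs by auto
    then show "AE t in lborel. t \<ge> 0 \<longrightarrow> D t = step_profile cs Ts t" using main by blast
  qed
qed



context
  fixes k :: "real \<Rightarrow> real" and r kmax :: real
  assumes r_pos: "r > 0"
    and k0: "k 0 = 0"
    and kcont: "continuous_on {0..} k"
    and kmono: "strict_mono_on {0..} k"
    and kdiff: "\<forall>c>0. k differentiable (at c)"
    and kdiff2: "\<forall>c>0. (deriv k) differentiable (at c)"
    and klim: "(k \<longlongrightarrow> kmax) at_top"
    and A3: "(\<forall>c>0. deriv (deriv k) c < 0) \<or>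
             (\<exists>c_infl>0. (\<forall>c. 0 < c \<and> c < c_infl \<longrightarrow> deriv (deriv k) c > 0) \<and>
                         (\<forall>c>c_infl. deriv (deriv k) c < 0))"
    and kr: "kmax > r"
begin

lemma dk: "c > 0 \<Longrightarrow> (k has_real_derivative deriv k c) (at c)"
  using kdiff DERIV_deriv_iff_real_differentiable by blast

lemma ddk: "c > 0 \<Longrightarrow> (deriv k has_real_derivative deriv (deriv k) c) (at c)"
  using kdiff2 DERIV_deriv_iff_real_differentiable by blast

lemma klt: "0 \<le> a \<Longrightarrow> a < b \<Longrightarrow> k a < k b"
  using kmono unfolding strict_mono_on_def by auto

lemma kle: "0 \<le> a \<Longrightarrow> a \<le> b \<Longrightarrow> k a \<le> k b"
  using klt[of a b] by (cases "a = b") auto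

lemma k_lt_kmax: "c \<ge> 0 \<Longrightarrow> k c < kmax"
proof -
  assume c: "c \<ge> 0"
  have "eventually (\<lambda>x. k (c+1) \<le> k x) at_top"
    using eventually_ge_at_top[of "c+1"] by eventually_elim (use c in \<open>auto intro: kle\<close>)
  then have "k (c+1) \<le> kmax" using klim by (intro tendsto_lowerbound) auto
  moreover have "k c < k (c+1)" using c by (intro klt) auto
  ultimately show ?thesis by simp
qed

lemma k_above: "y < kmax \<Longrightarrow> \<exists>c\<ge>0. k c > y"
proof -
  assume "y < kmax"
  then have "eventually (\<lambda>x. k x > y) at_top" using klim by (intro order_tendstoD(1))
  then obtain N where "\<forall>x\<ge>N. k x > y" by (auto simp: eventually_at_top_linorder)
  then show ?thesis by (intro exI[of _ "max N 0"]) auto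
qed

lemma k_small: "\<exists>a>0. k a < r"
proof -
  have "(k \<longlongrightarrow> k 0) (at 0 within {0..})"
    using kcont by (simp add: continuous_on_def)
  then have "(k \<longlongrightarrow> k 0) (at_right 0)"
    by (rule tendsto_within_subset) auto
  then have "eventually (\<lambda>x. k x < r) (at_right 0)"
    using r_pos k0 by (intro order_tendstoD) auto
  then obtain b where b: "b > 0" "\<forall>x. 0 < x \<and> x < b \<longrightarrow> k x < r"
    by (auto simp: eventually_at_right_field)
  then show ?thesis by (intro exI[of _ "b/2"]) auto
qed

definition g where "g c = c * deriv k c - k c + r"

lemma dg: "c > 0 \<Longrightarrow> (g has_real_derivative c * deriv (deriv k) c) (at c)"
proof -
  assume c: "c > 0"
  have h1: "((\<lambda>c. c * deriv k c) has_real_derivative (deriv k c + c * deriv (deriv k) c)) (at c)"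
    using DERIV_mult[OF DERIV_ident ddk[OF c]] by (simp add: algebra_simps)
  have "((\<lambda>c. c * deriv k c - k c + r) has_real_derivative
          (deriv k c + c * deriv (deriv k) c - deriv k c + 0)) (at c)"
    by (intro DERIV_add DERIV_diff h1 dk c DERIV_const)
  then show ?thesis unfolding g_def[abs_def] by simp
qed

lemma s_exists: "\<exists>s\<ge>0. (\<forall>c. 0 < c \<and> c \<le> s \<longrightarrow> g c > 0) \<and> (\<forall>w>s. deriv (deriv k) w < 0)"
  using A3
proof
  assume "\<forall>c>0. deriv (deriv k) c < 0"
  then show ?thesis by (intro exI[of _ 0]) auto
next
  assume "\<exists>c_infl>0. (\<forall>c. 0 < c \<and> c < c_infl \<longrightarrow> deriv (deriv k) c > 0) \<and>
                         (\<forall>c>c_infl. deriv (deriv k) c < 0)"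
  then obtain ci where ci: "ci > 0" "\<forall>c. 0 < c \<and> c < ci \<longrightarrow> deriv (deriv k) c > 0"
    "\<forall>c>ci. deriv (deriv k) c < 0" by blast
  have "g c > 0" if c: "0 < c" "c \<le> ci" for c
  proof -
    have "continuous_on {0..c} k" using kcont by (rule continuous_on_subset) auto
    moreover have "\<And>x. 0 < x \<Longrightarrow> x < c \<Longrightarrow> k differentiable (at x)" using kdiff by auto
    ultimately obtain l z where z: "0 < z" "z < c" "DERIV k z :> l" "k c - k 0 = (c - 0) * l"
      using MVT[OF c(1)] by blast
    have lz: "l = deriv k z" using z(3) dk[OF z(1)] DERIV_unique by blast
    obtain w where w: "z < w" "w < c" "deriv k c - deriv k z = (c - z) * deriv (deriv k) w"
      using MVT2[OF z(2), of "deriv k" "deriv (deriv k)"] ddk z(1) by force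
    have "deriv (deriv k) w > 0" using ci w z that by auto
    then have "(c - z) * deriv (deriv k) w > 0" using w z by simp
    then have "deriv k z \<le> deriv k c" using w(3) by linarith
    then have M: "c * deriv k z \<le> c * deriv k c" by (rule mult_left_mono) (use that in auto)
    have "k c = c * deriv k z" using z(4) lz k0 by simp
    then show ?thesis using M r_pos unfolding g_def by linarith
  qed
  then show ?thesis using ci by (intro exI[of _ ci]) auto
qed


lemma g_dec: assumes "s \<ge> 0" "\<forall>w>s. deriv (deriv k) w < 0" "s \<le> x" "0 < x" "x < y"
  shows "g y < g x"
proof -
  obtain z where z: "x < z" "z < y" "g y - g x = (y - x) * (z * deriv (deriv k) z)"
    using MVT2[OF assms(5), of g "\<lambda>z. z * deriv (deriv k) z"] dg assms(4) by force
  have "z * deriv (deriv k) z < 0" using z assms by (simp add: mult_pos_neg)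
  then have "(y - x) * (z * deriv (deriv k) z) < 0" using assms(5) by (simp add: mult_pos_neg)
  then show ?thesis using z(3) by linarith
qed

lemma root_unique: assumes "c > 0" "d > 0" "g c = 0" "g d = 0" shows "c = d"
proof -
  obtain s where s: "s \<ge> 0" "\<forall>c. 0 < c \<and> c \<le> s \<longrightarrow> g c > 0" "\<forall>w>s. deriv (deriv k) w < 0"
    using s_exists by blast
  have cs: "c > s" using s(2) assms by force
  have ds: "d > s" using s(2) assms by force
  show ?thesis
  proof (rule ccontr)
    assume "c \<noteq> d"
    then consider "c < d" | "d < c" by linarith
    then show False
    proof cases
      case 1 then show False using g_dec[OF s(1) s(3), of c d] cs assms by simp
    next
      case 2 then show False using g_dec[OF s(1) s(3), of d c] ds assms by simp
    qed
  qed
qed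

lemma fermat_h: assumes c: "c > 0" and mx: "\<forall>y>0. (k y - r) / y \<le> (k c - r) / c"
  shows "g c = 0"
proof -
  have D: "((\<lambda>x. (k x - r) / x) has_real_derivative
      ((deriv k c - 0) * c - (k c - r) * 1) / (c * c)) (at c)"
    using c by (intro DERIV_divide DERIV_diff dk DERIV_const DERIV_ident) auto
  have "((deriv k c - 0) * c - (k c - r) * 1) / (c * c) = 0"
  proof (rule DERIV_local_max[OF D c])
    show "\<forall>y. \<bar>c - y\<bar> < c \<longrightarrow> (k y - r) / y \<le> (k c - r) / c"
      using mx by auto
  qed
  then show ?thesis using c unfolding g_def by (simp add: algebra_simps)
qed

lemma max_exists: "\<exists>c0>0. (\<forall>c>0. (k c - r) / c \<le> (k c0 - r) / c0) \<and> (k c0 - r) / c0 > 0"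
proof -
  obtain a where a: "a > 0" "k a < r" using k_small by blast
  obtain c1 where c1: "c1 \<ge> 0" "k c1 > r" using k_above kr by blast
  have ac1: "a < c1"
  proof (rule ccontr)
    assume "\<not> a < c1"
    then have "k c1 \<le> k a" using c1 by (intro kle) auto
    then show False using a c1 by simp
  qed
  define h1 where "h1 = (k c1 - r) / c1"
  have h1: "h1 > 0" using c1 ac1 a unfolding h1_def by simp
  define B where "B = c1 + (kmax - r) / h1 + 1"
  have cB: "c1 \<le> B" using h1 kr unfolding B_def by simp
  have cont: "continuous_on {a..B} (\<lambda>x. (k x - r) / x)"
  proof (intro continuous_intros)
    show "continuous_on {a..B} k" using kcont by (rule continuous_on_subset) (use a in auto)
  qed (use a in auto)
  obtain c0 where c0: "c0 \<in> {a..B}" "\<forall>y\<in>{a..B}. (k y - r) / y \<le> (k c0 - r) / c0"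
    using continuous_attains_sup[OF compact_Icc _ cont] a ac1 cB by fastforce
  have hc0: "h1 \<le> (k c0 - r) / c0" using c0 ac1 cB unfolding h1_def by auto
  have all: "(k c - r) / c \<le> (k c0 - r) / c0" if c: "c > 0" for c
  proof -
    consider "c < a" | "c \<in> {a..B}" | "c > B" by force
    then show ?thesis
    proof cases
      case 1
      then have "k c \<le> k a" using c by (intro kle) auto
      then have "(k c - r) / c < 0" using a c by (simp add: divide_neg_pos)
      then show ?thesis using hc0 h1 by linarith
    next
      case 2 then show ?thesis using c0 by auto
    next
      case 3
      have "k c < kmax" using c by (intro k_lt_kmax) auto
      moreover have "kmax - r \<le> h1 * c"
      proof -
        have "(kmax - r) / h1 \<le> c" using 3 cB unfolding B_def using h1 kr c1 by simp
        then show ?thesis using h1 by (simp add: field_simps)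
      qed
      ultimately have "k c - r \<le> h1 * c" by simp
      then have "(k c - r) / c \<le> h1" using c by (simp add: field_simps)
      then show ?thesis using hc0 by linarith
    qed
  qed
  show ?thesis using all hc0 h1 c0 a by (intro exI[of _ c0]) auto
qed

lemma copt_props: "\<exists>c0>0. g c0 = 0 \<and> (\<forall>c>0. c \<noteq> c0 \<longrightarrow> (k c - r) / c < (k c0 - r) / c0)
   \<and> (k c0 - r) / c0 > 0 \<and> (THE c. 0 < c \<and> deriv k c = (k c - r) / c) = c0"
proof -
  obtain c0 where c0: "c0 > 0" "\<forall>c>0. (k c - r) / c \<le> (k c0 - r) / c0" "(k c0 - r) / c0 > 0"
    using max_exists by blast
  have g0: "g c0 = 0" using fermat_h c0 by blast
  have strict: "(k c - r) / c < (k c0 - r) / c0" if "c > 0" "c \<noteq> c0" for c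
  proof (rule ccontr)
    assume "\<not> ?thesis"
    then have "(k c - r) / c = (k c0 - r) / c0" using c0 that by force
    then have "\<forall>y>0. (k y - r) / y \<le> (k c - r) / c" using c0 by simp
    then have "g c = 0" using fermat_h that by blast
    then show False using root_unique[OF that(1) c0(1) _ g0] that by simp
  qed
  have gc: "(0 < c \<and> deriv k c = (k c - r) / c) \<longleftrightarrow> (0 < c \<and> g c = 0)" for c
    unfolding g_def by (auto simp: field_simps)
  have "(THE c. 0 < c \<and> deriv k c = (k c - r) / c) = c0"
    unfolding gc by (rule the_equality) (use c0 g0 root_unique in auto)
  then show ?thesis using c0 g0 strict by blast
qed

lemma kd_dec: assumes "c0 > 0" "g c0 = 0" "c0 \<le> x" "x < y"
  shows "deriv k y < deriv k x"
proof -
  obtain s where s: "s \<ge> 0" "\<forall>c. 0 < c \<and> c \<le> s \<longrightarrow> g c > 0" "\<forall>w>s. deriv (deriv k) w < 0"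
    using s_exists by blast
  have cs: "c0 > s" using s(2) assms by force
  obtain z where z: "x < z" "z < y" "deriv k y - deriv k x = (y - x) * deriv (deriv k) z"
    using MVT2[OF assms(4), of "deriv k" "deriv (deriv k)"] ddk assms by force
  have "deriv (deriv k) z < 0" using s(3) z cs assms by auto
  then have "(y - x) * deriv (deriv k) z < 0" using assms(4) by (simp add: mult_pos_neg)
  then show ?thesis using z(3) by linarith
qed


lemma part1:
  assumes LRt: "LRt > 0" and TH: "That \<ge> T_opt k r LRt"
  shows "is_solution k r LRt That (step_profile (c_opt k r) (T_opt k r LRt)) \<and>
        (\<forall>D. is_solution k r LRt That D \<longrightarrow>
           (AE t in lborel. t \<ge> 0 \<longrightarrow> D t = step_profile (c_opt k r) (T_opt k r LRt) t))"
proof -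
  obtain c0 where c0: "c0 > 0" "g c0 = 0" "\<forall>c>0. c \<noteq> c0 \<longrightarrow> (k c - r) / c < (k c0 - r) / c0"
     "(k c0 - r) / c0 > 0" "(THE c. 0 < c \<and> deriv k c = (k c - r) / c) = c0"
    using copt_props by blast
  have co: "c_opt k r = c0" unfolding c_opt_def using c0(5) .
  define m where "m = (k c0 - r) / c0"
  have m: "m > 0" using c0 unfolding m_def by simp
  have kc0: "k c0 - r > 0" using c0(1,4) by (simp add: zero_less_divide_iff)
  have atc: "k c0 - r = 0 + m * c0" unfolding m_def using c0(1) by simp
  have hle: "k c - r \<le> 0 + m * c" if "c \<ge> 0" for c
  proof (cases "c = 0")
    case True then show ?thesis using k0 r_pos by simp
  next
    case False
    then have cpos: "c > 0" using that by simp
    have "(k c - r) / c \<le> m"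
    proof (cases "c = c0")
      case True then show ?thesis by (simp add: m_def)
    next
      case False
      then have "(k c - r) / c < m" using c0(3) cpos unfolding m_def by blast
      then show ?thesis by simp
    qed
    then show ?thesis using that False by (simp add: field_simps)
  qed
  have heq: "c = c0" if "c \<ge> 0" "k c - r = 0 + m * c" for c
  proof (rule ccontr)
    assume ne: "c \<noteq> c0"
    show False
    proof (cases "c = 0")
      case True then show False using that k0 r_pos by simp
    next
      case False
      then have eq: "(k c - r) / c = m" using that by (simp add: field_simps)
      have "c > 0" using False that by simp
      then have "(k c - r) / c < m" using c0(3) ne unfolding m_def by blast
      then show False using eq by simp
    qed
  qed
  define Ts where "Ts = ln 10 * LRt / (k c0 - r)"
  have Tsd: "T_opt k r LRt = Ts" unfolding T_opt_def Ts_def co ..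
  have Ts0: "Ts \<ge> 0" unfolding Ts_def using kc0 LRt by simp
  have TsLR: "Ts * (k c0 - r) = ln 10 * LRt" unfolding Ts_def using kc0 by simp
  show ?thesis unfolding co Tsd
    by (rule abstract_opt[OF hle heq atc m order_refl c0(1) Ts0 _ TsLR _ LRt])
       (use TH Tsd in auto)
qed

lemma part2:
  assumes LRt: "LRt > 0" and TH: "That \<le> T_min kmax r LRt"
    and C: "conc_profile C" and T: "0 \<le> T" "T \<le> That" and LRC: "LR k r C T = LRt"
  shows False
proof -
  have ln10: "ln (10::real) > 0" by simp
  have I0: "integral {0..T} (\<lambda>t. k (C t) - r) = ln 10 * LRt"
    using LRC ln10 unfolding LR_def by (simp add: field_simps)
  have Kint: "(\<lambda>t. k (C t) - r) integrable_on {0..T}"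
  proof (rule ccontr)
    assume "\<not> ?thesis"
    then have "integral {0..T} (\<lambda>t. k (C t) - r) = 0" by (simp add: not_integrable_integral)
    with I0 LRt ln10 show False by simp
  qed
  have Tpos: "T > 0"
  proof (rule ccontr)
    assume "\<not> T > 0"
    then have "T = 0" using T by simp
    then have "integral {0..T} (\<lambda>t. k (C t) - r) = 0" by simp
    with I0 LRt ln10 show False by simp
  qed
  have Cnn: "\<And>t. t \<ge> 0 \<Longrightarrow> C t \<ge> 0" using C unfolding conc_profile_def by auto
  define f where "f t = (kmax - r) - (k (C t) - r)" for t
  have fhas: "(f has_integral (T * (kmax - r) - ln 10 * LRt)) {0..T}"
  proof -
    have "((\<lambda>t. kmax - r) has_integral T * (kmax - r)) {0..T}"
      using has_integral_const_real[of "kmax - r" 0 T] T by simp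
    moreover have "((\<lambda>t. k (C t) - r) has_integral ln 10 * LRt) {0..T}"
      using Kint I0 by (metis has_integral_integrable_integral)
    ultimately show ?thesis unfolding f_def by (rule has_integral_diff)
  qed
  have fpos: "0 < f t" if "t \<in> {0..T}" for t
  proof -
    have "t \<ge> 0" using that by simp
    then have "k (C t) < kmax" using Cnn k_lt_kmax by blast
    then show ?thesis by (simp add: f_def)
  qed
  have F0: "T * (kmax - r) - ln 10 * LRt \<ge> 0"
    using has_integral_nonneg[OF fhas] fpos less_imp_le by blast
  have "T * (kmax - r) - ln 10 * LRt \<noteq> 0"
  proof
    assume z: "T * (kmax - r) - ln 10 * LRt = 0"
    have "negligible {t\<in>{0..T}. f t \<noteq> 0}"
      using nonneg_int0_negligible[OF fhas[unfolded z]] fpos less_imp_le by blast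
    moreover have "{t\<in>{0..T}. f t \<noteq> 0} = {0..T}"
    proof (intro set_eqI iffI)
      fix t assume "t \<in> {0..T}" then have "f t > 0" by (rule fpos)
      then show "t \<in> {t\<in>{0..T}. f t \<noteq> 0}" using \<open>t \<in> {0..T}\<close> by simp
    qed simp
    ultimately have "negligible {0..T}" by simp
    then show False using Tpos negligible_interval(1)[of 0 T] by simp
  qed
  then have lt: "ln 10 * LRt < T * (kmax - r)" using F0 by simp
  have "T * (kmax - r) \<le> That * (kmax - r)" using T kr by (simp add: mult_right_mono)
  also have "\<dots> \<le> ln 10 * LRt"
    using TH kr unfolding T_min_def by (simp add: le_divide_eq)
  finally show False using lt by simp
qed


lemma part3_ex:
  assumes LRt: "LRt > 0" and TH: "T_min kmax r LRt < That" and Tp: "That > 0"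
  shows "\<exists>!c. c > 0 \<and> That * (k c - r) = ln 10 * LRt"
proof -
  define y where "y = r + ln 10 * LRt / That"
  have "ln 10 * LRt / (kmax - r) < That" using TH unfolding T_min_def .
  then have "ln 10 * LRt < That * (kmax - r)" using kr by (simp add: divide_less_eq mult.commute)
  then have "ln 10 * LRt / That < kmax - r" using Tp by (simp add: divide_less_eq mult.commute)
  then have yk: "y < kmax" unfolding y_def by simp
  have y0: "y > 0" unfolding y_def using r_pos LRt Tp by (simp add: add_pos_pos)
  obtain b where b: "b \<ge> 0" "k b > y" using k_above[OF yk] by blast
  have "continuous_on {0..b} k" using kcont by (rule continuous_on_subset) auto
  then obtain c where c: "0 \<le> c" "c \<le> b" "k c = y"
    using IVT'[of k 0 y b] k0 y0 b by auto
  have cpos: "c > 0" using c k0 y0 by (cases "c = 0") auto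
  have P: "That * (k c - r) = ln 10 * LRt" using c(3) Tp unfolding y_def by simp
  show ?thesis
  proof (rule ex1I[of _ c])
    show "c > 0 \<and> That * (k c - r) = ln 10 * LRt" using cpos P by simp
    fix d assume d: "d > 0 \<and> That * (k d - r) = ln 10 * LRt"
    then have "That * (k d - r) = That * (k c - r)" using P by simp
    then have "k d - r = k c - r" using Tp by simp
    then have kd: "k d = k c" by simp
    show "d = c"
    proof (rule ccontr)
      assume "d \<noteq> c"
      then consider "d < c" | "c < d" by linarith
      then show False
      proof cases
        case 1 then show False using klt[of d c] d kd by simp
      next
        case 2 then show False using klt[of c d] cpos kd by simp
      qed
    qed
  qed
qed

lemma part3_sol:
  assumes LRt: "LRt > 0" and TH: "That < T_opt k r LRt" and Tp: "That > 0"
    and ch: "ch > 0" "That * (k ch - r) = ln 10 * LRt"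
  shows "is_solution k r LRt That (step_profile ch That) \<and>
           (\<forall>D. is_solution k r LRt That D \<longrightarrow>
              (AE t in lborel. t \<ge> 0 \<longrightarrow> D t = step_profile ch That t))"
proof -
  obtain c0 where c0: "c0 > 0" "g c0 = 0" "\<forall>c>0. c \<noteq> c0 \<longrightarrow> (k c - r) / c < (k c0 - r) / c0"
     "(k c0 - r) / c0 > 0" "(THE c. 0 < c \<and> deriv k c = (k c - r) / c) = c0"
    using copt_props by blast
  have co: "c_opt k r = c0" unfolding c_opt_def using c0(5) .
  define m where "m = (k c0 - r) / c0"
  have kc0: "k c0 - r > 0" using c0(1,4) by (simp add: zero_less_divide_iff)
  have mder: "deriv k c0 = m" using c0(1,2) unfolding m_def g_def by (simp add: field_simps)
  have "That < ln 10 * LRt / (k c0 - r)" using TH unfolding T_opt_def co .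
  then have "That * (k c0 - r) < ln 10 * LRt" using kc0 by (simp add: less_divide_eq)
  then have "k c0 < k ch" using ch(2) Tp by (smt (verit) mult_left_mono)
  then have chc0: "c0 < ch"
    using kle[of ch c0] ch(1) by (cases "c0 < ch") auto
  define B where "B = deriv k ch"
  define A where "A = k ch - r - B * ch"
  have atc: "k ch - r = A + B * ch" unfolding A_def by simp
  have Bm: "B < m" unfolding B_def using kd_dec[OF c0(1) c0(2) order_refl chc0] mder by simp
  have Bpos: "B > 0"
  proof -
    obtain z where z: "ch + 1 < z" "z < ch + 2" "k (ch + 2) - k (ch + 1) = (ch + 2 - (ch + 1)) * deriv k z"
      using MVT2[of "ch+1" "ch+2" k "deriv k"] dk ch(1) by force
    have "k (ch + 1) < k (ch + 2)" using ch(1) by (intro klt) auto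
    then have "deriv k z > 0" using z(3) by simp
    moreover have "deriv k z < deriv k ch" using kd_dec[OF c0(1) c0(2), of ch z] chc0 z by simp
    ultimately show ?thesis unfolding B_def by simp
  qed
  have tang: "k c - r < A + B * c" if t1: "c0 \<le> c" and t2: "c \<noteq> ch" for c
  proof -
    consider "ch < c" | "c < ch" using t2 neq_iff by blast
    then have "k c - k ch < B * (c - ch)"
    proof cases
      case 1
      obtain z where z: "ch < z" "z < c" "k c - k ch = (c - ch) * deriv k z"
        using MVT2[OF 1, of k "deriv k"] dk ch(1) by force
      have "deriv k z < B" unfolding B_def using kd_dec[OF c0(1) c0(2), of ch z] chc0 z by simp
      then have "(c - ch) * deriv k z < (c - ch) * B" using 1 by simp
      then show ?thesis using z(3) by (simp add: mult.commute)
    next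
      case 2
      have cp: "c > 0" using t1 c0(1) by simp
      obtain z where z: "c < z" "z < ch" "k ch - k c = (ch - c) * deriv k z"
        using MVT2[OF 2, of k "deriv k"] dk cp by force
      have "B < deriv k z" unfolding B_def using kd_dec[OF c0(1) c0(2), of z ch] t1 z by simp
      then have "(ch - c) * B < (ch - c) * deriv k z" using 2 by simp
      then show ?thesis using z(3) by (simp add: algebra_simps)
    qed
    then show ?thesis unfolding A_def by (simp add: algebra_simps)
  qed
  have below: "m * c < A + B * c" if "c < c0" for c
  proof -
    have "k c0 - r < A + B * c0" using tang[of c0] chc0 by simp
    moreover have "k c0 - r = m * c0" unfolding m_def using c0(1) by simp
    moreover have "0 < (B - m) * (c - c0)" using Bm that by (simp add: mult_neg_neg)
    ultimately show ?thesis by (simp add: algebra_simps)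
  qed
  have le_m: "k c - r \<le> m * c" if "c \<ge> 0" for c
  proof (cases "c = 0")
    case True then show ?thesis using k0 r_pos by simp
  next
    case False
    then have cpos: "c > 0" using that by simp
    have "(k c - r) / c \<le> m"
    proof (cases "c = c0")
      case True then show ?thesis by (simp add: m_def)
    next
      case False
      then have "(k c - r) / c < m" using c0(3) cpos unfolding m_def by blast
      then show ?thesis by simp
    qed
    then show ?thesis using cpos by (simp add: field_simps)
  qed
  have strict: "k c - r < A + B * c" if "c \<ge> 0" "c \<noteq> ch" for c
  proof (cases "c < c0")
    case True then show ?thesis using le_m[OF that(1)] below[OF True] by simp
  next
    case False then show ?thesis using tang that by simp
  qed
  have line: "k c - r \<le> A + B * c" if "c \<ge> 0" for c
    using strict[OF that] atc by (cases "c = ch") auto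
  have eqc: "c = ch" if "c \<ge> 0" "k c - r = A + B * c" for c
    using strict[OF that(1)] that(2) by (cases "c = ch") auto
  have A0: "A \<ge> 0" using below[of 0] c0(1) by simp
  show ?thesis
    by (rule abstract_opt[OF line eqc atc Bpos A0 ch(1) _ order_refl ch(2) _ LRt])
       (use Tp in auto)
qed

end

theorem theorem2:
  fixes k :: "real \<Rightarrow> real" and r kmax LRt That :: real
  assumes r_pos: "r > 0"
    and A1_0: "k 0 = 0"
    and A1_nonneg: "\<forall>c\<ge>0. k c \<ge> 0"
    and A1_cont: "continuous_on {0..} k"
    and A1_mono: "strict_mono_on {0..} k"
    and A1_diff: "\<forall>c>0. k differentiable (at c)"
    and A1_diff2: "\<forall>c>0. (deriv k) differentiable (at c)"
    and A2: "(k \<longlongrightarrow> kmax) at_top"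
    and A3: "(\<forall>c>0. deriv (deriv k) c < 0) \<or>
             (\<exists>c_infl>0. (\<forall>c. 0 < c \<and> c < c_infl \<longrightarrow> deriv (deriv k) c > 0) \<and>
                         (\<forall>c>c_infl. deriv (deriv k) c < 0))"
    and alpha: "kmax / r > 1"
    and LRt_pos: "LRt > 0"
    and That_pos: "That > 0"
  shows
    "(That \<ge> T_opt k r LRt \<longrightarrow>
        is_solution k r LRt That (step_profile (c_opt k r) (T_opt k r LRt)) \<and>
        (\<forall>D. is_solution k r LRt That D \<longrightarrow>
           (AE t in lborel. t \<ge> 0 \<longrightarrow> D t = step_profile (c_opt k r) (T_opt k r LRt) t)))
   \<and> (That \<le> T_min kmax r LRt \<longrightarrow>
        \<not> (\<exists>C T. conc_profile C \<and> 0 \<le> T \<and> T \<le> That \<and> LR k r C T = LRt))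
   \<and> (T_min kmax r LRt < That \<and> That < T_opt k r LRt \<longrightarrow>
        (\<exists>!c. c > 0 \<and> That * (k c - r) = ln 10 * LRt) \<and>
        (\<forall>c. c > 0 \<and> That * (k c - r) = ln 10 * LRt \<longrightarrow>
           is_solution k r LRt That (step_profile c That) \<and>
           (\<forall>D. is_solution k r LRt That D \<longrightarrow>
              (AE t in lborel. t \<ge> 0 \<longrightarrow> D t = step_profile c That t))))"
proof -
  have kr: "kmax > r" using alpha r_pos by (simp add: less_divide_eq)
  note H = r_pos A1_0 A1_cont A1_mono A1_diff A1_diff2 A2 A3 kr
  have P1: "That \<ge> T_opt k r LRt \<longrightarrow>
        is_solution k r LRt That (step_profile (c_opt k r) (T_opt k r LRt)) \<and>
        (\<forall>D. is_solution k r LRt That D \<longrightarrow>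
           (AE t in lborel. t \<ge> 0 \<longrightarrow> D t = step_profile (c_opt k r) (T_opt k r LRt) t))"
    using part1[OF H LRt_pos] by blast
  have P2: "That \<le> T_min kmax r LRt \<longrightarrow>
        \<not> (\<exists>C T. conc_profile C \<and> 0 \<le> T \<and> T \<le> That \<and> LR k r C T = LRt)"
    using part2[OF H LRt_pos] by blast
  have P3: "T_min kmax r LRt < That \<and> That < T_opt k r LRt \<longrightarrow>
        (\<exists>!c. c > 0 \<and> That * (k c - r) = ln 10 * LRt)"
    using part3_ex[OF H LRt_pos _ That_pos] by blast
  have P4: "T_min kmax r LRt < That \<and> That < T_opt k r LRt \<longrightarrow>
        (\<forall>c. c > 0 \<and> That * (k c - r) = ln 10 * LRt \<longrightarrow>
           is_solution k r LRt That (step_profile c That) \<and>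
           (\<forall>D. is_solution k r LRt That D \<longrightarrow>
              (AE t in lborel. t \<ge> 0 \<longrightarrow> D t = step_profile c That t)))"
    using part3_sol[OF H LRt_pos _ That_pos] by blast
  show ?thesis using P1 P2 P3 P4 by blast
qed

end
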